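(* Let $G=C\ltimes Q$, where $C$ is an elementary abelian $2$-group and $Q$ is a finite abelian group of odd exponent $n'$. Then $$\{g^{2n'/d}\mid g\in G\}=\{g\in G\mid g^d=1\}$$ for every divisor $d$ of $2n'$ such that either $d=2$, or $d\mid n'$ and $\gcd(d,n'/d)=1$. *)

theory Defs
  imports "HOL-Algebra.Algebra"
begin

definition group_exponent :: "('a, 'b) monoid_scheme \<Rightarrow> nat" where
  "group_exponent G = (LEAST n. n > 0 \<and> (\<forall>x\<in>carrier G. x [^]\<^bsub>G\<^esub> n = \<one>\<^bsub>G\<^esub>))"

definition elementary_abelian_2_group :: "('a, 'b) monoid_scheme \<Rightarrow> bool" where
  "elementary_abelian_2_group G \<longleftrightarrow>
     comm_group G \<and> (\<forall>x\<in>carrier G. x [^]\<^bsub>G\<^esub> (2::nat) = \<one>\<^bsub>G\<^esub>)"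

definition internal_semidirect :: "('a, 'b) monoid_scheme \<Rightarrow> 'a set \<Rightarrow> 'a set \<Rightarrow> bool" where
  "internal_semidirect G C Q \<longleftrightarrow>
     subgroup C G \<and> Q \<lhd> G \<and> C \<inter> Q = {\<one>\<^bsub>G\<^esub>} \<and> C <#>\<^bsub>G\<^esub> Q = carrier G"

end

theory Submission
  imports Defs
begin

lemma pow_upd_carrier: "x [^]\<^bsub>G\<lparr>carrier := S\<rparr>\<^esub> (n::nat) = x [^]\<^bsub>G\<^esub> n"
  by (induct n) auto

lemma generic_sets:
  fixes G (structure) and N d :: nat
  assumes grp: "group G" and all: "\<forall>g\<in>carrier G. g [^]\<^bsub>G\<^esub> N = \<one>\<^bsub>G\<^esub>"
    and Npos: "N > 0" and dN: "d dvd N" and cop: "coprime d (N div d)"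
  shows "{g [^]\<^bsub>G\<^esub> (N div d) | g. g \<in> carrier G} = {g \<in> carrier G. g [^]\<^bsub>G\<^esub> d = \<one>\<^bsub>G\<^esub>}"
proof -
  interpret group G by fact
  show ?thesis
  proof (intro equalityI subsetI)
    fix x assume "x \<in> {g [^] (N div d) | g. g \<in> carrier G}"
    then obtain g where g: "g \<in> carrier G" "x = g [^] (N div d)" by blast
    have "x [^] d = g [^] (N div d * d)" unfolding g(2) by (rule nat_pow_pow[OF g(1)])
    also have "N div d * d = N" using dN by simp
    also have "g [^] N = \<one>" using g(1) all by blast
    finally have x1: "x [^] d = \<one>" .
    have xc: "x \<in> carrier G" unfolding g(2) using g(1) by (rule nat_pow_closed)
    show "x \<in> {g \<in> carrier G. g [^] d = \<one>}" using xc x1 by (rule CollectI[of _ x, OF conjI])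
  next
    fix x assume "x \<in> {g \<in> carrier G. g [^] d = \<one>}"
    hence x: "x \<in> carrier G" "x [^] d = \<one>" by auto
    let ?k = "N div d"
    have k0: "?k \<noteq> 0" 
    proof
      assume "N div d = 0"
      then have "N = 0" using dN by (metis dvd_mult_div_cancel mult_0_right)
      with Npos show False by simp
    qed
    obtain a y where a: "?k * a = d * y + gcd ?k d" using bezout_nat[OF k0] by blast
    have "gcd ?k d = 1" using cop by (simp add: coprime_iff_gcd_eq_1 gcd.commute)
    with a have a1: "?k * a = d * y + 1" by simp
    have e1: "x [^] (?k * a) = x [^] (d * y) \<otimes> x [^] (1::nat)"
      unfolding a1 by (rule nat_pow_mult[OF x(1), symmetric])
    have e2: "x [^] (d * y) = (x [^] d) [^] y" by (rule nat_pow_pow[OF x(1), symmetric])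
    have e3: "x [^] (?k * a) = x" using e1 e2 x by simp
    have e4: "(x [^] a) [^] ?k = x [^] (a * ?k)" by (rule nat_pow_pow[OF x(1)])
    have xe: "x = (x [^] a) [^] ?k" using e3 e4 by (simp add: mult.commute)
    have xa: "x [^] a \<in> carrier G" using x(1) by (rule nat_pow_closed)
    show "x \<in> {g [^] (N div d) | g. g \<in> carrier G}"
      by (rule CollectI, rule exI[of _ "x [^] a"], rule conjI[OF xe xa])
  qed
qed

theorem mainTheorem10:
  fixes G :: "('a, 'b) monoid_scheme" and C Q :: "'a set" and n' :: nat
  assumes "group G"
    and "internal_semidirect G C Q"
    and "elementary_abelian_2_group (G\<lparr>carrier := C\<rparr>)"
    and "finite Q"
    and "comm_group (G\<lparr>carrier := Q\<rparr>)"
    and "n' = group_exponent (G\<lparr>carrier := Q\<rparr>)"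
    and "odd n'"
  shows "\<forall>d::nat. d dvd 2 * n' \<longrightarrow> (d = 2 \<or> (d dvd n' \<and> coprime d (n' div d))) \<longrightarrow>
           {g [^]\<^bsub>G\<^esub> (2 * n' div d) | g. g \<in> carrier G} =
           {g \<in> carrier G. g [^]\<^bsub>G\<^esub> d = \<one>\<^bsub>G\<^esub>}"
proof -
  interpret group G by fact
  have sub: "subgroup C G" and nQ: "Q \<lhd> G" and CQ: "C <#>\<^bsub>G\<^esub> Q = carrier G"
    using assms(2) unfolding internal_semidirect_def by auto
  interpret nq: normal Q G by fact
  have c2: "\<forall>c\<in>C. c [^]\<^bsub>G\<^esub> (2::nat) = \<one>\<^bsub>G\<^esub>"
    using assms(3) unfolding elementary_abelian_2_group_def by (simp add: pow_upd_carrier)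
  interpret Qg: comm_group "G\<lparr>carrier := Q\<rparr>" by fact
  have "\<one>\<^bsub>G\<^esub> \<in> Q" by (simp add: nq.one_closed)
  hence ordpos: "order (G\<lparr>carrier := Q\<rparr>) > 0" using assms(4) unfolding order_def by (simp add: card_gt_0_iff; blast)
  have ordp: "\<forall>x\<in>Q. x [^]\<^bsub>G\<^esub> order (G\<lparr>carrier := Q\<rparr>) = \<one>\<^bsub>G\<^esub>"
    using Qg.pow_order_eq_1 by (simp add: pow_upd_carrier)
  have qexp: "\<forall>x\<in>Q. x [^]\<^bsub>G\<^esub> n' = \<one>\<^bsub>G\<^esub>"
  proof -
    have "0 < n' \<and> (\<forall>x\<in>carrier (G\<lparr>carrier := Q\<rparr>). x [^]\<^bsub>G\<lparr>carrier := Q\<rparr>\<^esub> n' = \<one>\<^bsub>G\<lparr>carrier := Q\<rparr>\<^esub>)"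
      unfolding assms(6) group_exponent_def
      by (rule LeastI[of _ "order (G\<lparr>carrier := Q\<rparr>)"]) (use ordpos ordp in \<open>auto simp: pow_upd_carrier\<close>)
    thus ?thesis by (simp add: pow_upd_carrier)
  qed
  have sq: "g [^]\<^bsub>G\<^esub> (2::nat) \<in> Q" if g: "g \<in> carrier G" for g
  proof -
    have "g \<in> C <#>\<^bsub>G\<^esub> Q" using g by (simp only: CQ)
    then have "g \<in> (\<Union>h\<in>C. \<Union>k\<in>Q. {h \<otimes>\<^bsub>G\<^esub> k})" unfolding set_mult_def .
    then obtain c q where cq: "c \<in> C" "q \<in> Q" "g = c \<otimes>\<^bsub>G\<^esub> q" by blast
    have cG: "c \<in> carrier G" by (rule subgroup.mem_carrier[OF sub cq(1)])
    have qG: "q \<in> carrier G" by (rule subsetD[OF nq.subset cq(2)])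
    have "c [^]\<^bsub>G\<^esub> (2::nat) = \<one>\<^bsub>G\<^esub>" using c2 cq(1) by blast
    then have cc: "c \<otimes>\<^bsub>G\<^esub> c = \<one>\<^bsub>G\<^esub>" using cG by (simp add: numeral_2_eq_2)
    have ci: "inv\<^bsub>G\<^esub> c = c" by (rule inv_equality[OF cc cG cG])
    have "g [^]\<^bsub>G\<^esub> (2::nat) = (c \<otimes>\<^bsub>G\<^esub> q \<otimes>\<^bsub>G\<^esub> inv\<^bsub>G\<^esub> c) \<otimes>\<^bsub>G\<^esub> q"
      using cq cG qG ci by (simp add: numeral_2_eq_2 m_assoc)
    moreover have "c \<otimes>\<^bsub>G\<^esub> q \<otimes>\<^bsub>G\<^esub> inv\<^bsub>G\<^esub> c \<in> Q" by (rule nq.inv_op_closed2[OF cG cq(2)])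
    ultimately show ?thesis using cq nq.m_closed by simp
  qed
  have all: "\<forall>g\<in>carrier G. g [^]\<^bsub>G\<^esub> (2 * n') = \<one>\<^bsub>G\<^esub>"
  proof
    fix g assume g: "g \<in> carrier G"
    have "g [^]\<^bsub>G\<^esub> (2 * n') = (g [^]\<^bsub>G\<^esub> (2::nat)) [^]\<^bsub>G\<^esub> n'"
      by (rule nat_pow_pow[OF g, symmetric])
    then show "g [^]\<^bsub>G\<^esub> (2 * n') = \<one>\<^bsub>G\<^esub>" using sq[OF g] qexp by simp
  qed
  show ?thesis
  proof (intro allI impI)
    fix d assume dd: "d dvd 2 * n'" and h: "d = 2 \<or> d dvd n' \<and> coprime d (n' div d)"
    have "coprime d (2 * n' div d)"
    proof (cases "d = 2")
      case True then show ?thesis using assms(7) by simp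
    next
      case False
      with h have dn: "d dvd n'" and cp: "coprime d (n' div d)" by auto
      have "odd d" using dn assms(7) using dvd_trans by blast
      moreover have "2 * n' div d = 2 * (n' div d)" using dn by (simp add: div_mult_swap)
      ultimately show ?thesis using cp by simp
    qed
    moreover have "2 * n' > 0" using assms(7) by (cases n') auto
    ultimately show "{g [^]\<^bsub>G\<^esub> (2 * n' div d) | g. g \<in> carrier G} = {g \<in> carrier G. g [^]\<^bsub>G\<^esub> d = \<one>\<^bsub>G\<^esub>}"
      using generic_sets[OF assms(1) all _ dd] by simp
  qed
qed

end
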